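(* Let $\lambda>0$, let $\omega$ be a rooted tree (root $\varrho$) in which every vertex has finitely many and at least one child, and let $(X(u),u\in\mathbb{T})$ be the $\lambda$-biased branching random walk on $\omega$ with reproduction law $\mu$ ($\mu_0=0$, $\mu_1<1$, $m=\sum_k k\mu_k\in(1,\infty)$), started from one particle at $\varrho$. Assume that this branching random walk is strongly recurrent on $\omega$, i.e. for every vertex $x$, $\mathbf{P}_\omega(\forall n\ \exists u\in\mathbb{T}:|u|\ge n, X(u)=x\mid X(\varnothing)=x)=1$. Then for every $a>0$, $$\mathbf{P}_\omega\Big(\liminf_{n\to\infty}\max_{|u|=n}\frac{|X(u)|}{n}\ge a\Big)\in\{0,1\}.$$
   Context: $|x|$ is the distance of $x$ to $\varrho$, $x_-$ the parent and $\kappa_x$ the number of children of $x$. The $\lambda$-biased random walk on $\omega$ jumps from $\varrho$ to each child with probability $1/\kappa_\varrho$, and from $x\ne\varrho$ to $x_-$ with probability $\lambda/(\lambda+\kappa_x)$ and to each child with probability $1/(\lambda+\kappa_x)$. The branching random walk: genealogy $\mathbb{T}$ is a Bienaymé–Galton–Watson tree with offspring law $\mu$ (root $\varnothing$, $|u|$ = generation); each child of a particle at $x$ is placed independently by one step of the $\lambda$-biased walk from $x$; $\mathbf{P}_\omega$ denotes its law. *)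

theory Defs
  imports "HOL-Probability.Probability"
begin

text \<open>A rooted tree in which every vertex has finitely many and at least one child
is encoded (up to isomorphism) by its child-count function kappa on Ulam--Harris
words: the root is the empty word, the children of x are x@[i] for i < kappa x,
the parent of x is butlast x, and |x| = length x.\<close>

definition uh_vertices :: "(nat list \<Rightarrow> nat) \<Rightarrow> nat list set" where
  "uh_vertices k = {x. \<forall>i < length x. x ! i < k (take i x)}"

definition biased_step :: "real \<Rightarrow> (nat list \<Rightarrow> nat) \<Rightarrow> nat list \<Rightarrow> nat list pmf" where
  "biased_step lam kappa x =
     (if x = [] then map_pmf (\<lambda>i. [i]) (pmf_of_set {..<kappa []})
      else bind_pmf (bernoulli_pmf (lam / (lam + real (kappa x))))
             (\<lambda>b. if b then return_pmf (butlast x)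
                  else map_pmf (\<lambda>i. x @ [i]) (pmf_of_set {..<kappa x})))"

text \<open>Canonical construction: an outcome is a pair (N, xi), where N u is the
number of children of the particle u (i.i.d. with law mu) and xi (u, x) is an
independent step of the biased walk from x (law biased_step x), used as the
displacement of particle u when its parent sits at x.\<close>

definition gw_tree :: "(nat list \<Rightarrow> nat) \<Rightarrow> nat list set" where
  "gw_tree N = uh_vertices N"

fun pos_rev :: "(nat list \<times> nat list \<Rightarrow> nat list) \<Rightarrow> nat list \<Rightarrow> nat list \<Rightarrow> nat list" where
  "pos_rev \<xi> x0 [] = x0"
| "pos_rev \<xi> x0 (i # ru) = \<xi> (rev (i # ru), pos_rev \<xi> x0 ru)"

definition brw_pos :: "(nat list \<times> nat list \<Rightarrow> nat list) \<Rightarrow> nat list \<Rightarrow> nat list \<Rightarrow> nat list" where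
  "brw_pos \<xi> x0 u = pos_rev \<xi> x0 (rev u)"

text \<open>The law P_omega of the branching random walk (the starting point is
given separately to brw_pos).\<close>
definition brw_measure ::
  "real \<Rightarrow> (nat list \<Rightarrow> nat) \<Rightarrow> nat pmf \<Rightarrow>
     ((nat list \<Rightarrow> nat) \<times> (nat list \<times> nat list \<Rightarrow> nat list)) measure" where
  "brw_measure lam kappa \<mu> =
     (PiM UNIV (\<lambda>_. measure_pmf \<mu>)) \<Otimes>\<^sub>M
     (PiM UNIV (\<lambda>(u, x). measure_pmf (biased_step lam kappa x)))"

end

theory Submission
  imports Defs "HOL-Probability.Probability" "HOL-Real_Asymp.Real_Asymp"
begin

type_synonym cfg = "(nat list \<Rightarrow> nat) \<times> (nat list \<times> nat list \<Rightarrow> nat list)"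

lemma brw_prob_space: "prob_space (brw_measure lam kappa \<mu>)"
  unfolding brw_measure_def
  by (intro prob_space_pair prob_space_PiM) (auto simp: prob_space_measure_pmf split: prod.splits)

lemma space_brw[simp]: "space (brw_measure lam kappa \<mu>) = UNIV"
  unfolding brw_measure_def by (auto simp: space_pair_measure space_PiM)

lemma meas_N:
  "(\<lambda>\<omega>. fst \<omega> w) \<in> measurable (brw_measure lam kappa \<mu>) (count_space UNIV)"
proof -
  have "(\<lambda>\<omega>. fst \<omega> w) \<in> measurable (brw_measure lam kappa \<mu>) (measure_pmf \<mu>)"
    unfolding brw_measure_def
    by (intro measurable_compose[OF measurable_fst] measurable_component_singleton) auto
  then show ?thesis using measurable_cong_sets[OF refl sets_measure_pmf_count_space] by blast
qed

lemma meas_xi: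
  "(\<lambda>\<omega>. snd \<omega> p) \<in> measurable (brw_measure lam kappa \<mu>) (count_space UNIV)"
proof -
  have "(\<lambda>\<omega>. snd \<omega> p) \<in> measurable (brw_measure lam kappa \<mu>) ((\<lambda>(u, x). measure_pmf (biased_step lam kappa x)) p)"
    unfolding brw_measure_def
    by (intro measurable_compose[OF measurable_snd] measurable_component_singleton) auto
  then show ?thesis using measurable_cong_sets[OF refl sets_measure_pmf_count_space]
    by (cases p) auto
qed

type_synonym idx = "nat list + (nat list \<times> nat list)"

definition coord :: "idx \<Rightarrow> cfg \<Rightarrow> nat list" where
  "coord i \<omega> = (case i of Inl w \<Rightarrow> [fst \<omega> w] | Inr p \<Rightarrow> snd \<omega> p)"

definition gen :: "idx set \<Rightarrow> cfg set set" where
  "gen I = {coord i -` A | i A. i \<in> I}"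

definition Fs :: "idx set \<Rightarrow> cfg set set" where
  "Fs I = sigma_sets UNIV (gen I)"

locale brw =
  fixes lam :: real and kappa :: "nat list \<Rightarrow> nat" and mu :: "nat pmf"
begin

abbreviation "PP \<equiv> brw_measure lam kappa mu"
abbreviation "M1 \<equiv> PiM (UNIV :: nat list set) (\<lambda>_. measure_pmf mu)"
abbreviation "M2 \<equiv> PiM (UNIV :: (nat list \<times> nat list) set) (\<lambda>(u, x). measure_pmf (biased_step lam kappa x))"

sublocale prob_space PP by (rule brw_prob_space)

lemma PP_def': "PP = M1 \<Otimes>\<^sub>M M2" by (simp add: brw_measure_def)

lemma coord_meas: "coord i \<in> measurable PP (count_space UNIV)"
proof (cases i)
  case (Inl w)
  have "(\<lambda>\<omega>. [fst \<omega> w]) \<in> measurable PP (count_space UNIV)"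
    by (rule measurable_compose[OF meas_N measurable_count_space])
  then show ?thesis using Inl by (simp add: coord_def[abs_def])
next
  case (Inr p)
  then show ?thesis using meas_xi[of p lam kappa mu] by (simp add: coord_def[abs_def])
qed

lemma coord_events: "coord i -` A \<in> events"
  using coord_meas[of i] by (metis measurable_sets space_brw sets_UNIV inf_top.right_neutral)

lemma emeasure_M1_cyl:
  assumes "finite J"
  shows "emeasure M1 {f. \<forall>w\<in>J. f w \<in> B w} = (\<Prod>w\<in>J. emeasure (measure_pmf mu) (B w))"
proof -
  have "{f. \<forall>w\<in>J. f w \<in> B w} = prod_emb UNIV (\<lambda>_. measure_pmf mu) J (Pi\<^sub>E J B)"
    by (auto simp: prod_emb_def space_PiM)
  then show ?thesis using assms
    by (simp add: emeasure_PiM_emb prob_space_measure_pmf)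
qed

lemma emeasure_M2_cyl:
  assumes "finite J"
  shows "emeasure M2 {f. \<forall>p\<in>J. f p \<in> B p} = (\<Prod>p\<in>J. emeasure (measure_pmf (biased_step lam kappa (snd p))) (B p))"
proof -
  have "{f. \<forall>w\<in>J. f w \<in> B w} = prod_emb UNIV (\<lambda>(u, x). measure_pmf (biased_step lam kappa x)) J (Pi\<^sub>E J B)"
    by (auto simp: prod_emb_def space_PiM)
  moreover have "emeasure M2 (prod_emb UNIV (\<lambda>(u, x). measure_pmf (biased_step lam kappa x)) J (Pi\<^sub>E J B))
     = (\<Prod>p\<in>J. emeasure ((\<lambda>(u, x). measure_pmf (biased_step lam kappa x)) p) (B p))"
    using assms by (intro emeasure_PiM_emb) (auto simp: prob_space_measure_pmf split: prod.splits)
  ultimately show ?thesis by (simp add: case_prod_beta)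
qed

lemma M1_cyl_sets: "finite J \<Longrightarrow> {f. \<forall>w\<in>J. f w \<in> B w} \<in> sets M1"
proof -
  assume J: "finite J"
  have "{f. \<forall>w\<in>J. f w \<in> B w} = prod_emb UNIV (\<lambda>_. measure_pmf mu) J (Pi\<^sub>E J B)"
    by (auto simp: prod_emb_def space_PiM)
  also have "\<dots> \<in> sets M1" using J by (intro sets_PiM_I) auto
  finally show ?thesis .
qed

lemma M2_cyl_sets: "finite J \<Longrightarrow> {f. \<forall>w\<in>J. f w \<in> B w} \<in> sets M2"
proof -
  assume J: "finite J"
  have "{f. \<forall>w\<in>J. f w \<in> B w} = prod_emb UNIV (\<lambda>(u, x). measure_pmf (biased_step lam kappa x)) J (Pi\<^sub>E J B)"
    by (auto simp: prod_emb_def space_PiM)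
  also have "\<dots> \<in> sets M2" using J by (intro sets_PiM_I) (auto split: prod.splits)
  finally show ?thesis .
qed

definition ecoord :: "idx \<Rightarrow> nat list set \<Rightarrow> ennreal" where
  "ecoord j S = (case j of Inl w \<Rightarrow> emeasure (measure_pmf mu) {n. [n] \<in> S}
      | Inr p \<Rightarrow> emeasure (measure_pmf (biased_step lam kappa (snd p))) S)"

lemma emeasure_cyl:
  assumes J: "finite J"
  shows "emeasure PP (\<Inter>j\<in>J. coord j -` S j) = (\<Prod>j\<in>J. ecoord j (S j))"
proof -
  define J1 where "J1 = {w. Inl w \<in> J}"
  define J2 where "J2 = {p. Inr p \<in> J}"
  have fJ1: "finite J1" unfolding J1_def using finite_vimageI[OF J, of Inl] by (simp add: vimage_def)
  have fJ2: "finite J2" unfolding J2_def using finite_vimageI[OF J, of Inr] by (simp add: vimage_def)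
  have JJ: "J = Inl ` J1 \<union> Inr ` J2" unfolding J1_def J2_def
  proof (rule set_eqI)
    fix x show "x \<in> J \<longleftrightarrow> x \<in> Inl ` {w. Inl w \<in> J} \<union> Inr ` {p. Inr p \<in> J}"
      by (cases x) auto
  qed
  have eq: "(\<Inter>j\<in>J. coord j -` S j) = {f. \<forall>w\<in>J1. f w \<in> {n. [n] \<in> S (Inl w)}} \<times> {f. \<forall>p\<in>J2. f p \<in> S (Inr p)}"
    unfolding JJ INT_Un by (auto simp: coord_def image_image)
  interpret M2: prob_space M2 by (intro prob_space_PiM) (auto simp: prob_space_measure_pmf split: prod.splits)
  have "emeasure PP (\<Inter>j\<in>J. coord j -` S j) =
      emeasure M1 {f. \<forall>w\<in>J1. f w \<in> {n. [n] \<in> S (Inl w)}} * emeasure M2 {f. \<forall>p\<in>J2. f p \<in> S (Inr p)}"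
    unfolding eq PP_def'
    by (intro M2.emeasure_pair_measure_Times M1_cyl_sets M2_cyl_sets fJ1 fJ2)
  also have "\<dots> = (\<Prod>j\<in>Inl ` J1. ecoord j (S j)) * (\<Prod>j\<in>Inr ` J2. ecoord j (S j))"
    by (subst emeasure_M1_cyl[OF fJ1], subst emeasure_M2_cyl[OF fJ2]) (simp add: prod.reindex ecoord_def)
  also have "\<dots> = (\<Prod>j\<in>J. ecoord j (S j))"
    unfolding JJ by (rule prod.union_disjoint[symmetric]) (use fJ1 fJ2 in auto)
  finally show ?thesis .
qed

lemma indep_coord: "indep_sets (\<lambda>i. {coord i -` A | A. True}) UNIV"
  unfolding indep_sets_def
proof (intro conjI ballI allI impI)
  fix i show "{coord i -` A | A. True} \<subseteq> events" using coord_events by auto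
next
  fix J :: "idx set" and A assume J: "J \<noteq> {}" "finite J" and A: "A \<in> Pi J (\<lambda>i. {coord i -` A | A. True})"
  have "\<forall>j\<in>J. \<exists>S. A j = coord j -` S" using A by (auto simp: Pi_iff)
  then obtain S where S: "\<And>j. j \<in> J \<Longrightarrow> A j = coord j -` S j" using bchoice[of J] by metis
  have "emeasure PP (\<Inter>j\<in>J. A j) = (\<Prod>j\<in>J. ecoord j (S j))"
    using emeasure_cyl[OF J(2), of S] S by (metis (no_types, lifting) INF_cong)
  also have "\<dots> = (\<Prod>j\<in>J. emeasure PP (A j))"
    using emeasure_cyl[of "{j}" S for j] S by (auto intro!: prod.cong)
  finally have "emeasure PP (\<Inter>j\<in>J. A j) = (\<Prod>j\<in>J. emeasure PP (A j))" .
  then show "prob (\<Inter>j\<in>J. A j) = (\<Prod>j\<in>J. prob (A j))"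
    by (simp add: emeasure_eq_measure prod_ennreal measure_nonneg)
       (subst (asm) ennreal_inj; auto intro!: prod_nonneg)
qed

lemma indep_Fs:
  assumes "I \<inter> J = {}" "S \<in> Fs I" "T \<in> Fs J"
  shows "prob (S \<inter> T) = prob S * prob T"
proof -
  have "indep_sets (\<lambda>b. sigma_sets (space PP) (\<Union>i\<in>(case b of True \<Rightarrow> I | False \<Rightarrow> J). {coord i -` A | A. True})) UNIV"
  proof (rule indep_sets_collect_sigma)
    show "indep_sets (\<lambda>i. {coord i -` A |A. True}) (\<Union>b. case b of True \<Rightarrow> I | False \<Rightarrow> J)"
      by (rule indep_sets_mono_index[OF _ indep_coord]) simp
    show "Int_stable {coord i -` A |A. True}" for i
      unfolding Int_stable_def by auto (metis vimage_Int)
    show "disjoint_family (\<lambda>j. case j of True \<Rightarrow> I | False \<Rightarrow> J)"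
      using assms(1) by (auto simp: disjoint_family_on_def split: bool.splits)
  qed
  moreover have "(\<Union>i\<in>I. {coord i -` A | A. True}) = gen I" for I unfolding gen_def by auto
  ultimately have "indep_set (Fs I) (Fs J)"
    unfolding indep_set_def Fs_def
    by (simp only: space_brw) (erule indep_sets_cong[THEN iffD1, rotated 2]; auto split: bool.splits)
  then show ?thesis using indep_setD assms by blast
qed

end

definition lev :: "(nat list \<Rightarrow> nat) \<Rightarrow> nat \<Rightarrow> nat list set" where
  "lev N n = {u. u \<in> gw_tree N \<and> length u = n}"

lemma lev_Suc: "lev N (Suc n) \<subseteq> (\<Union>u\<in>lev N n. (\<lambda>i. u @ [i]) ` {..<N u})"
proof
  fix v assume "v \<in> lev N (Suc n)"
  then have v: "\<forall>i<length v. v ! i < N (take i v)" "length v = Suc n"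
    by (auto simp: lev_def gw_tree_def uh_vertices_def)
  then obtain u i where vi: "v = u @ [i]" using rev_exhaust[of v] by (cases v) auto
  have "u \<in> lev N n" using v vi
  proof -
    have "u ! i' < N (take i' u)" if "i' < length u" for i'
      using v(1)[rule_format, of i'] that vi by (simp add: nth_append)
    then show ?thesis using v vi by (auto simp: lev_def gw_tree_def uh_vertices_def)
  qed
  moreover have "i < N u" using v(1)[rule_format, of "length u"] vi by simp
  ultimately show "v \<in> (\<Union>u\<in>lev N n. (\<lambda>i. u @ [i]) ` {..<N u})" using vi by auto
qed

lemma finite_lev: "finite (lev N n)"
proof (induction n)
  case 0
  have "lev N 0 \<subseteq> {[]}" by (auto simp: lev_def)
  then show ?case using finite_subset by blast
next
  case (Suc n)
  then show ?case by (intro finite_subset[OF lev_Suc] finite_UN_I) auto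
qed

definition Mx :: "nat \<Rightarrow> cfg \<Rightarrow> real" where
  "Mx n \<omega> = Max ((\<lambda>u. real (length (brw_pos (snd \<omega>) [] u)) / real n) ` lev (fst \<omega>) n)"

context brw
begin

lemma Collect_events: "Measurable.pred PP P \<Longrightarrow> Collect P \<in> events"
  by (simp add: pred_def)

lemma meas_N'[measurable]: "(\<lambda>\<omega>. fst \<omega> w) \<in> measurable PP (count_space UNIV)"
  by (rule meas_N)
lemma meas_xi'[measurable]: "(\<lambda>\<omega>. snd \<omega> p) \<in> measurable PP (count_space UNIV)"
  by (rule meas_xi)

lemma meas_tree[measurable]: "Measurable.pred PP (\<lambda>\<omega>. u \<in> gw_tree (fst \<omega>))"
  unfolding gw_tree_def uh_vertices_def by measurable

lemma meas_pos_rev: "(\<lambda>\<omega>. pos_rev (snd \<omega>) x ru) \<in> measurable PP (count_space UNIV)"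
proof (induction ru)
  case Nil then show ?case by simp
next
  case (Cons i ru)
  have "(\<lambda>\<omega>. (\<lambda>y \<omega>. snd \<omega> (rev (i # ru), y)) (pos_rev (snd \<omega>) x ru) \<omega>) \<in> measurable PP (count_space UNIV)"
    by (rule measurable_compose_countable'[where I=UNIV, OF _ Cons]) auto
  then show ?case by simp
qed

lemma meas_pos[measurable]: "(\<lambda>\<omega>. brw_pos (snd \<omega>) x u) \<in> measurable PP (count_space UNIV)"
  unfolding brw_pos_def by (rule meas_pos_rev)

lemma meas_lev: "(\<lambda>\<omega>. lev (fst \<omega>) n) \<in> measurable PP (count_space (Collect finite))"
proof (subst measurable_count_space_eq_countable)
  show "countable (Collect finite :: nat list set set)" by (rule countable_Collect_finite)
  show "(\<lambda>\<omega>. lev (fst \<omega>) n) \<in> space PP \<rightarrow> Collect finite \<and>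
    (\<forall>S\<in>Collect finite. (\<lambda>\<omega>. lev (fst \<omega>) n) -` {S} \<inter> space PP \<in> sets PP)"
  proof (intro conjI ballI)
    fix S :: "nat list set"
    have "(\<lambda>\<omega>. lev (fst \<omega>) n) -` {S} \<inter> space PP = {\<omega>. \<forall>u. (u \<in> gw_tree (fst \<omega>) \<and> length u = n \<longrightarrow> u \<in> S)
       \<and> (u \<in> S \<longrightarrow> u \<in> gw_tree (fst \<omega>) \<and> length u = n)}"
      by (auto simp: lev_def)
    also have "\<dots> \<in> sets PP" by (rule Collect_events) measurable
    finally show "(\<lambda>\<omega>. lev (fst \<omega>) n) -` {S} \<inter> space PP \<in> sets PP" .
  qed (auto simp: finite_lev)
qed

lemma meas_Mx[measurable]: "Mx n \<in> borel_measurable PP"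
proof -
  have "(\<lambda>\<omega>. (\<lambda>S \<omega>. Max ((\<lambda>u. real (length (brw_pos (snd \<omega>) [] u)) / real n) ` S)) (lev (fst \<omega>) n) \<omega>) \<in> borel_measurable PP"
    by (rule measurable_compose_countable'[OF _ meas_lev countable_Collect_finite])
       (intro borel_measurable_Max; auto)
  then show ?thesis by (simp add: Mx_def[abs_def])
qed

definition "Eset a = {\<omega>. ereal a \<le> liminf (\<lambda>n. ereal (Mx n \<omega>))}"

lemma meas_liminf_Mx[measurable]: "(\<lambda>\<omega>. liminf (\<lambda>n. ereal (Mx n \<omega>))) \<in> borel_measurable PP"
  by (rule borel_measurable_liminf) measurable

lemma Eset_sets: "Eset a \<in> events"
  unfolding Eset_def by (rule Collect_events) measurable

end

definition Ig :: "nat \<Rightarrow> idx set" where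
  "Ig g = Inl ` {w. length w < g} \<union> Inr ` {p. length (fst p) \<le> g}"
definition Ju :: "nat list \<Rightarrow> idx set" where
  "Ju u = Inl ` {w. \<exists>v. w = u @ v} \<union> Inr ` {p. \<exists>v. v \<noteq> [] \<and> fst p = u @ v}"

lemma Ig_Ju_disj: "Ig (length u) \<inter> Ju u = {}"
  by (auto simp: Ig_def Ju_def)

lemma Ig_mono: "g \<le> g' \<Longrightarrow> Ig g \<subseteq> Ig g'"
  by (auto simp: Ig_def)

lemma Fs_mono: "I \<subseteq> J \<Longrightarrow> Fs I \<subseteq> Fs J"
  unfolding Fs_def gen_def by (intro sigma_sets_mono') auto

definition trunc :: "nat \<Rightarrow> cfg \<Rightarrow> cfg" where
  "trunc g \<omega> = (\<lambda>w. if length w < g then fst \<omega> w else 1, \<lambda>p. if length (fst p) \<le> g then snd \<omega> p else [])"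
definition shft :: "nat list \<Rightarrow> cfg \<Rightarrow> cfg" where
  "shft u \<omega> = (\<lambda>v. fst \<omega> (u @ v), \<lambda>(v, y). snd \<omega> (u @ v, y))"
definition clean :: "cfg \<Rightarrow> cfg" where
  "clean \<omega> = (fst \<omega>, \<lambda>(v, y). if v = [] then [] else snd \<omega> (v, y))"

lemma pos_rev_append:
  "pos_rev \<xi> x (rv @ ru) = pos_rev (\<lambda>(v', y). \<xi> (rev ru @ v', y)) (pos_rev \<xi> x ru) rv"
  by (induction rv) auto

lemma pos_append:
  "brw_pos \<xi> x (u @ v) = brw_pos (\<lambda>(v', y). \<xi> (u @ v', y)) (brw_pos \<xi> x u) v"
  unfolding brw_pos_def using pos_rev_append[of \<xi> x "rev v" "rev u"] by simp

lemma pos_rev_clean: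
  "pos_rev (\<lambda>(v, y). if v = [] then [] else \<xi> (v, y)) x ru = pos_rev \<xi> x ru"
  by (induction ru) auto

lemma pos_clean[simp]: "brw_pos (snd (clean \<omega>)) x u = brw_pos (snd \<omega>) x u"
  unfolding brw_pos_def clean_def using pos_rev_clean by simp

lemma tree_append:
  assumes "u \<in> gw_tree N"
  shows "u @ v \<in> gw_tree N \<longleftrightarrow> v \<in> gw_tree (\<lambda>v. N (u @ v))"
proof -
  have u: "\<forall>i<length u. u ! i < N (take i u)" using assms by (simp add: gw_tree_def uh_vertices_def)
  have "(\<forall>i<length (u @ v). (u @ v) ! i < N (take i (u @ v))) \<longleftrightarrow>
        (\<forall>j<length v. v ! j < N (u @ take j v))"
  proof
    assume H: "\<forall>i<length (u @ v). (u @ v) ! i < N (take i (u @ v))"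
    show "\<forall>j<length v. v ! j < N (u @ take j v)"
    proof (intro allI impI)
      fix j assume "j < length v"
      then show "v ! j < N (u @ take j v)" using H[rule_format, of "length u + j"] by (simp add: nth_append)
    qed
  next
    assume H: "\<forall>j<length v. v ! j < N (u @ take j v)"
    show "\<forall>i<length (u @ v). (u @ v) ! i < N (take i (u @ v))"
    proof (intro allI impI)
      fix i assume i: "i < length (u @ v)"
      show "(u @ v) ! i < N (take i (u @ v))"
      proof (cases "i < length u")
        case True then show ?thesis using u by (simp add: nth_append)
      next
        case False
        then obtain j where "i = length u + j" by (metis le_iff_add not_less)
        then show ?thesis using H[rule_format, of j] i by (simp add: nth_append)
      qed
    qed
  qed
  then show ?thesis by (simp add: gw_tree_def uh_vertices_def)
qed

lemma pos_rev_trunc: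
  "length ru \<le> g \<Longrightarrow> pos_rev (\<lambda>p. if length (fst p) \<le> g then \<xi> p else []) x ru = pos_rev \<xi> x ru"
  by (induction ru) auto

lemma pos_trunc: "length u \<le> g \<Longrightarrow> brw_pos (snd (trunc g \<omega>)) x u = brw_pos (snd \<omega>) x u"
  unfolding brw_pos_def trunc_def using pos_rev_trunc[of "rev u" g] by simp

lemma tree_trunc: "length u \<le> g \<Longrightarrow> u \<in> gw_tree (fst (trunc g \<omega>)) \<longleftrightarrow> u \<in> gw_tree (fst \<omega>)"
  unfolding gw_tree_def uh_vertices_def trunc_def by auto

lemma space_sigma_gen[simp]: "space (sigma UNIV (gen I)) = UNIV"
  by (rule space_measure_of) auto
lemma sets_sigma_gen[simp]: "sets (sigma UNIV (gen I)) = Fs I"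
  unfolding Fs_def by (rule sets_measure_of) auto

lemma coord_meas_gen: "i \<in> I \<Longrightarrow> coord i \<in> measurable (sigma UNIV (gen I)) (count_space UNIV)"
  unfolding measurable_def Fs_def by (auto simp: gen_def intro!: sigma_sets.Basic)

lemma N_meas_gen: "Inl w \<in> I \<Longrightarrow> (\<lambda>\<omega>. fst \<omega> w) \<in> measurable (sigma UNIV (gen I)) (count_space UNIV)"
proof -
  assume "Inl w \<in> I"
  from measurable_compose[OF coord_meas_gen[OF this], of hd "count_space UNIV"]
  show ?thesis by (simp add: coord_def)
qed

lemma xi_meas_gen: "Inr p \<in> I \<Longrightarrow> (\<lambda>\<omega>. snd \<omega> p) \<in> measurable (sigma UNIV (gen I)) (count_space UNIV)"
  using coord_meas_gen[of "Inr p" I] by (simp add: coord_def[abs_def])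

context brw
begin

lemma meas_into_PP:
  assumes "\<And>w. (\<lambda>\<omega>. fst (\<rho> \<omega>) w) \<in> measurable M (count_space UNIV)"
      and "\<And>p. (\<lambda>\<omega>. snd (\<rho> \<omega>) p) \<in> measurable M (count_space UNIV)"
  shows "\<rho> \<in> measurable M PP"
proof -
  have 1: "(\<lambda>\<omega>. fst (\<rho> \<omega>)) \<in> measurable M M1"
  proof -
    have "(\<lambda>\<omega> w. fst (\<rho> \<omega>) w) \<in> measurable M M1"
    proof (rule measurable_PiM_single')
      fix w :: "nat list"
      show "(\<lambda>\<omega>. fst (\<rho> \<omega>) w) \<in> measurable M (measure_pmf mu)"
        using assms(1)[of w] by (simp only: measurable_cong_sets[OF refl sets_measure_pmf_count_space])
    qed (auto simp: space_PiM)
    then show ?thesis by simp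
  qed
  have 2: "(\<lambda>\<omega>. snd (\<rho> \<omega>)) \<in> measurable M M2"
  proof -
    have "(\<lambda>\<omega> p. snd (\<rho> \<omega>) p) \<in> measurable M M2"
    proof (rule measurable_PiM_single')
      fix p :: "nat list \<times> nat list"
      have "(\<lambda>\<omega>. snd (\<rho> \<omega>) p) \<in> measurable M (measure_pmf (biased_step lam kappa (snd p)))"
        using assms(2)[of p] by (simp only: measurable_cong_sets[OF refl sets_measure_pmf_count_space])
      then show "(\<lambda>\<omega>. snd (\<rho> \<omega>) p) \<in> measurable M ((\<lambda>(u, x). measure_pmf (biased_step lam kappa x)) p)"
        by (simp add: case_prod_beta)
    qed (auto simp: space_PiM)
    then show ?thesis by simp
  qed
  have "(\<lambda>\<omega>. (fst (\<rho> \<omega>), snd (\<rho> \<omega>))) \<in> measurable M PP"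
    unfolding PP_def' by (rule measurable_Pair[OF 1 2])
  then show ?thesis by simp
qed

lemma Fs_vimage:
  assumes "\<rho> \<in> measurable (sigma UNIV (gen I)) PP" "S \<in> events"
  shows "\<rho> -` S \<in> Fs I"
  using measurable_sets[OF assms] by simp

lemma trunc_meas: "trunc g \<in> measurable (sigma UNIV (gen (Ig g))) PP"
proof (rule meas_into_PP)
  fix w show "(\<lambda>\<omega>. fst (trunc g \<omega>) w) \<in> measurable (sigma UNIV (gen (Ig g))) (count_space UNIV)"
    by (cases "length w < g") (auto simp: trunc_def Ig_def intro: N_meas_gen)
next
  fix p show "(\<lambda>\<omega>. snd (trunc g \<omega>) p) \<in> measurable (sigma UNIV (gen (Ig g))) (count_space UNIV)"
    by (cases "length (fst p) \<le> g") (auto simp: trunc_def Ig_def intro: xi_meas_gen)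
qed

lemma shft'_meas: "(\<lambda>\<omega>. clean (shft u \<omega>)) \<in> measurable (sigma UNIV (gen (Ju u))) PP"
proof (rule meas_into_PP)
  fix w show "(\<lambda>\<omega>. fst (clean (shft u \<omega>)) w) \<in> measurable (sigma UNIV (gen (Ju u))) (count_space UNIV)"
    by (auto simp: clean_def shft_def Ju_def intro!: N_meas_gen)
next
  fix p :: "nat list \<times> nat list"
  obtain v y where p: "p = (v, y)" by (cases p)
  show "(\<lambda>\<omega>. snd (clean (shft u \<omega>)) p) \<in> measurable (sigma UNIV (gen (Ju u))) (count_space UNIV)"
    using xi_meas_gen[of "(u @ v, y)" "Ju u"]
    by (cases "v = []") (auto simp: clean_def shft_def Ju_def p)
qed

end

definition ret :: "nat \<Rightarrow> cfg \<Rightarrow> nat list \<Rightarrow> bool" where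
  "ret K \<omega> v \<longleftrightarrow> v \<in> gw_tree (fst \<omega>) \<and> K \<le> length v \<and> brw_pos (snd \<omega>) [] v = []"

definition before :: "nat list \<Rightarrow> nat list \<Rightarrow> bool" where
  "before u v \<longleftrightarrow> length u < length v \<or> (length u = length v \<and> to_nat u \<le> to_nat v)"

definition Dset :: "nat \<Rightarrow> nat list \<Rightarrow> cfg set" where
  "Dset K u = {\<omega>. ret K \<omega> u \<and> (\<forall>v. ret K \<omega> v \<longrightarrow> before u v)}"

lemma D_disj: "\<omega> \<in> Dset K u \<Longrightarrow> \<omega> \<in> Dset K u' \<Longrightarrow> u = u'"
proof -
  assume 1: "\<omega> \<in> Dset K u" and 2: "\<omega> \<in> Dset K u'"
  have "before u u'" "before u' u" using 1 2 unfolding Dset_def by auto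
  then have "to_nat u = to_nat u'" unfolding before_def by auto
  then show "u = u'" by (simp add: inj_eq[OF inj_to_nat])
qed

lemma D_cover:
  assumes "ret K \<omega> v"
  shows "\<exists>u. \<omega> \<in> Dset K u"
proof -
  define n0 where "n0 = (LEAST n. \<exists>v. ret K \<omega> v \<and> length v = n)"
  have n0: "\<exists>v. ret K \<omega> v \<and> length v = n0" unfolding n0_def by (rule LeastI_ex) (use assms in auto)
  define k0 where "k0 = (LEAST k. \<exists>v. ret K \<omega> v \<and> length v = n0 \<and> to_nat v = k)"
  have k0: "\<exists>v. ret K \<omega> v \<and> length v = n0 \<and> to_nat v = k0" unfolding k0_def by (rule LeastI_ex) (use n0 in auto)
  then obtain u where u: "ret K \<omega> u" "length u = n0" "to_nat u = k0" by blast
  have "before u v" if "ret K \<omega> v" for v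
  proof -
    have "n0 \<le> length v" unfolding n0_def by (rule Least_le) (use that in auto)
    moreover have "k0 \<le> to_nat v" if "length v = n0" unfolding k0_def by (rule Least_le) (use that \<open>ret K \<omega> v\<close> in auto)
    ultimately show ?thesis using u by (auto simp: before_def)
  qed
  then show ?thesis using u by (auto simp: Dset_def)
qed

lemma D_trunc: "trunc (length u) -` Dset K u = Dset K u"
proof -
  have r: "ret K (trunc (length u) \<omega>) v = ret K \<omega> v" if "length v \<le> length u" for \<omega> v
    using that by (simp add: ret_def tree_trunc pos_trunc)
  have "(ret K (trunc (length u) \<omega>) v \<longrightarrow> before u v) \<longleftrightarrow> (ret K \<omega> v \<longrightarrow> before u v)" for \<omega> v
  proof (cases "length v \<le> length u")
    case True then show ?thesis using r by simp
  next
    case False then show ?thesis by (simp add: before_def)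
  qed
  then have "(\<forall>v. ret K (trunc (length u) \<omega>) v \<longrightarrow> before u v) \<longleftrightarrow> (\<forall>v. ret K \<omega> v \<longrightarrow> before u v)" for \<omega>
    by blast
  then show ?thesis unfolding Dset_def using r[of u] by auto
qed

lemma Mx_clean: "Mx n (clean \<omega>) = Mx n \<omega>"
proof -
  have "fst (clean \<omega>) = fst \<omega>" by (simp add: clean_def)
  then show ?thesis unfolding Mx_def pos_clean by simp
qed

context brw
begin

lemma ret_events: "Measurable.pred PP (\<lambda>\<omega>. ret K \<omega> v)"
  unfolding ret_def by measurable

lemma D_events: "Dset K u \<in> events"
  unfolding Dset_def using ret_events[measurable] by (intro Collect_events) measurable

lemma D_Fs: "Dset K u \<in> Fs (Ig (length u))"
proof -
  have "trunc (length u) -` Dset K u \<in> Fs (Ig (length u))" by (rule Fs_vimage[OF trunc_meas D_events])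
  then show ?thesis by (simp only: D_trunc)
qed

lemma Eset_clean: "clean -` Eset a = Eset a"
  by (auto simp: Eset_def Mx_clean)

lemma shift_meas_M1: "(\<lambda>N. \<lambda>v. N (u @ v)) \<in> measurable M1 M1"
  by (rule measurable_PiM_single'[of UNIV "\<lambda>v N. N (u @ v)", simplified])
     (auto intro: measurable_component_singleton simp: space_PiM)

lemma shift_meas_M2: "(\<lambda>\<xi>. \<lambda>(v, y). \<xi> (u @ v, y)) \<in> measurable M2 M2"
proof -
  have "(\<lambda>\<xi> p. (\<lambda>p \<xi>. \<xi> (u @ fst p, snd p)) p \<xi>) \<in> measurable M2 M2"
  proof (rule measurable_PiM_single')
    fix p :: "nat list \<times> nat list"
    show "(\<lambda>\<xi>. \<xi> (u @ fst p, snd p)) \<in> measurable M2 ((\<lambda>(u, x). measure_pmf (biased_step lam kappa x)) p)"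
      using measurable_component_singleton[of "(u @ fst p, snd p)" UNIV "\<lambda>(u, x). measure_pmf (biased_step lam kappa x)"]
      by (simp add: case_prod_beta)
  qed (auto simp: space_PiM)
  then show ?thesis by (simp add: case_prod_beta')
qed

lemma distr_M1: "distr M1 M1 (\<lambda>N. \<lambda>v. N (u @ v)) = M1"
  using distr_PiM_reindex[of UNIV "\<lambda>_. measure_pmf mu" "\<lambda>v. u @ v" UNIV]
  by (simp add: prob_space_measure_pmf inj_on_def restrict_UNIV)

lemma distr_M2: "distr M2 M2 (\<lambda>\<xi>. \<lambda>(v, y). \<xi> (u @ v, y)) = M2"
proof -
  have A: "distr M2 (\<Pi>\<^sub>M i\<in>UNIV. (\<lambda>(u, x). measure_pmf (biased_step lam kappa x)) ((\<lambda>(v, y). (u @ v, y)) i))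
     (\<lambda>\<omega>. \<lambda>n\<in>UNIV. \<omega> ((\<lambda>(v, y). (u @ v, y)) n)) =
    (\<Pi>\<^sub>M i\<in>UNIV. (\<lambda>(u, x). measure_pmf (biased_step lam kappa x)) ((\<lambda>(v, y). (u @ v, y)) i))"
    by (rule distr_PiM_reindex) (auto simp: prob_space_measure_pmf inj_on_def split: prod.splits)
  have B: "(\<lambda>i. (\<lambda>(u, x). measure_pmf (biased_step lam kappa x)) ((\<lambda>(v, y). (u @ v, y)) i)) =
     (\<lambda>(u, x). measure_pmf (biased_step lam kappa x))" by (auto simp: fun_eq_iff)
  have C: "(\<lambda>\<omega>. \<lambda>n\<in>UNIV. \<omega> ((\<lambda>(v, y). (u @ v, y)) n)) = (\<lambda>\<xi>. \<lambda>(v, y). \<xi> (u @ v, y))"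
    by (auto simp: fun_eq_iff restrict_UNIV)
  show ?thesis using A unfolding B C .
qed

lemma distr_shift: "distr PP PP (shft u) = PP"
proof -
  interpret M2: prob_space M2 by (intro prob_space_PiM) (auto simp: prob_space_measure_pmf split: prod.splits)
  have "distr M1 M1 (\<lambda>N. \<lambda>v. N (u @ v)) \<Otimes>\<^sub>M distr M2 M2 (\<lambda>\<xi>. \<lambda>(v, y). \<xi> (u @ v, y)) =
      distr (M1 \<Otimes>\<^sub>M M2) (M1 \<Otimes>\<^sub>M M2) (\<lambda>(x, y). ((\<lambda>N. \<lambda>v. N (u @ v)) x, (\<lambda>\<xi>. \<lambda>(v, y). \<xi> (u @ v, y)) y))"
    by (rule pair_measure_distr[OF shift_meas_M1 shift_meas_M2])
       (simp add: distr_M2 M2.sigma_finite_measure_axioms)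
  moreover have "(\<lambda>(x, y). ((\<lambda>N. \<lambda>v. N (u @ v)) x, (\<lambda>\<xi>. \<lambda>(v, y). \<xi> (u @ v, y)) y)) = shft u"
    by (auto simp: shft_def fun_eq_iff)
  ultimately show ?thesis by (simp add: distr_M1 distr_M2 PP_def')
qed

lemma shift_meas: "shft u \<in> measurable PP PP"
proof -
  have "(\<lambda>(x, y). ((\<lambda>N. \<lambda>v. N (u @ v)) x, (\<lambda>\<xi>. \<lambda>(v, y). \<xi> (u @ v, y)) y)) \<in> measurable (M1 \<Otimes>\<^sub>M M2) (M1 \<Otimes>\<^sub>M M2)"
    using shift_meas_M1 shift_meas_M2 by measurable
  moreover have "(\<lambda>(x, y). ((\<lambda>N. \<lambda>v. N (u @ v)) x, (\<lambda>\<xi>. \<lambda>(v, y). \<xi> (u @ v, y)) y)) = shft u"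
    by (auto simp: shft_def fun_eq_iff)
  ultimately show ?thesis by (simp add: PP_def')
qed

lemma prob_shift: "S \<in> events \<Longrightarrow> prob (shft u -` S) = prob S"
  using measure_distr[OF shift_meas, of S u] distr_shift[of u] by simp

definition "Tset a u = (\<lambda>\<omega>. clean (shft u \<omega>)) -` (UNIV - Eset a)"

lemma Tset_eq: "Tset a u = shft u -` (UNIV - Eset a)"
proof -
  have H: "\<forall>x. clean x \<in> Eset a \<longleftrightarrow> x \<in> Eset a" using Eset_clean[of a] by blast
  show ?thesis
  proof (rule set_eqI)
    fix \<omega> show "\<omega> \<in> Tset a u \<longleftrightarrow> \<omega> \<in> shft u -` (UNIV - Eset a)"
      using H[rule_format, of "shft u \<omega>"] by (simp add: Tset_def)
  qed
qed

lemma compl_ev: "A \<in> events \<Longrightarrow> UNIV - A \<in> events"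
proof -
  assume "A \<in> events"
  then have "space PP - A \<in> events" by (rule sets.compl_sets)
  then show "UNIV - A \<in> events" by (simp only: space_brw)
qed

lemma compl_E: "UNIV - Eset a \<in> events"
  by (rule compl_ev[OF Eset_sets])

lemma Tset_Fs: "Tset a u \<in> Fs (Ju u)"
  unfolding Tset_def by (rule Fs_vimage[OF shft'_meas compl_E])

lemma prob_Tset: "prob (Tset a u) = 1 - prob (Eset a)"
proof -
  have "prob (space PP - Eset a) = 1 - prob (Eset a)" by (rule prob_compl[OF Eset_sets])
  then have "prob (UNIV - Eset a) = 1 - prob (Eset a)" by (simp only: space_brw)
  then show ?thesis by (simp add: Tset_eq prob_shift[OF compl_E])
qed

lemma Fs_Int: "S \<in> Fs I \<Longrightarrow> T \<in> Fs I \<Longrightarrow> S \<inter> T \<in> Fs I"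
proof -
  interpret sigma_algebra UNIV "Fs I" unfolding Fs_def by (rule sigma_algebra_sigma_sets) auto
  show "S \<in> Fs I \<Longrightarrow> T \<in> Fs I \<Longrightarrow> S \<inter> T \<in> Fs I" by auto
qed

lemma Fs_events: "S \<in> Fs I \<Longrightarrow> S \<in> events"
  unfolding Fs_def
proof (induction rule: sigma_sets.induct)
  case (Basic a) then show ?case using coord_events by (auto simp: gen_def)
next
  case (Compl a) then show ?case using sets.compl_sets[of a PP] by simp
qed auto

lemma claim2:
  assumes B: "B \<in> Fs (Ig K)"
  shows "prob (B \<inter> (\<Union>u. Dset K u \<inter> Tset a u)) \<le> (1 - prob (Eset a)) * prob B"
proof -
  define q where "q = 1 - prob (Eset a)"
  have q0: "q \<ge> 0" unfolding q_def by simp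
  define F where "F u = B \<inter> Dset K u \<inter> Tset a u" for u
  define G where "G u = B \<inter> Dset K u" for u
  have Bev: "B \<in> events" using Fs_events[OF B] .
  have Tev: "Tset a u \<in> events" for u using Fs_events[OF Tset_Fs] .
  have Fev: "F u \<in> events" for u unfolding F_def using Bev Tev D_events by auto
  have Gev: "G u \<in> events" for u unfolding G_def using Bev D_events by auto
  have FG: "prob (F u) = q * prob (G u)" for u
  proof (cases "K \<le> length u")
    case True
    have "B \<in> Fs (Ig (length u))" using B Fs_mono[OF Ig_mono[OF True]] by auto
    then have "G u \<in> Fs (Ig (length u))" unfolding G_def by (intro Fs_Int D_Fs)
    then have "prob (G u \<inter> Tset a u) = prob (G u) * prob (Tset a u)"
      by (intro indep_Fs[OF Ig_Ju_disj _ Tset_Fs])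
    then show ?thesis by (simp add: F_def G_def prob_Tset q_def Int_assoc)
  next
    case False
    then have "Dset K u = {}" by (auto simp: Dset_def ret_def)
    then show ?thesis by (simp add: F_def G_def)
  qed
  have dF: "disjoint_family F" and dG: "disjoint_family G"
    unfolding disjoint_family_on_def F_def G_def by (auto dest: D_disj)
  have "emeasure PP (\<Union>(F ` UNIV)) = (\<integral>\<^sup>+u. emeasure PP (F u) \<partial>count_space UNIV)"
    by (rule emeasure_UN_countable) (use Fev dF in auto)
  also have "\<dots> = (\<integral>\<^sup>+u. ennreal q * emeasure PP (G u) \<partial>count_space UNIV)"
    by (intro nn_integral_cong) (simp add: emeasure_eq_measure FG ennreal_mult q0)
  also have "\<dots> = ennreal q * (\<integral>\<^sup>+u. emeasure PP (G u) \<partial>count_space UNIV)"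
    by (rule nn_integral_cmult) auto
  also have "(\<integral>\<^sup>+u. emeasure PP (G u) \<partial>count_space UNIV) = emeasure PP (\<Union>(G ` UNIV))"
    by (rule emeasure_UN_countable[symmetric]) (use Gev dG in auto)
  also have "\<dots> \<le> emeasure PP B" unfolding G_def by (intro emeasure_mono Bev) auto
  finally have "emeasure PP (\<Union>(F ` UNIV)) \<le> ennreal q * emeasure PP B"
    by (meson dual_order.trans mult_left_mono zero_le)
  moreover have "\<Union>(F ` UNIV) = B \<inter> (\<Union>u. Dset K u \<inter> Tset a u)" unfolding F_def by auto
  ultimately show ?thesis
    by (simp add: emeasure_eq_measure ennreal_mult[symmetric] q0 q_def)
qed

end

lemma liminf_scale:
  fixes x c :: "nat \<Rightarrow> real"
  assumes H: "ereal a \<le> liminf (\<lambda>n. ereal (x n))" and a: "0 < a" and c: "c \<longlonglongrightarrow> 1"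
  shows "ereal a \<le> liminf (\<lambda>n. ereal (x n * c n))"
proof -
  have "\<forall>y<ereal a. eventually (\<lambda>n. y < ereal (x n * c n)) sequentially"
  proof (intro allI impI)
    fix y assume y: "y < ereal a"
    obtain y' where y': "0 < y'" "y' < a" "y \<le> ereal y'"
    proof (cases "y \<le> 0")
      case True then show ?thesis using a by (intro that[of "a/2"]) (auto intro: order_trans[of y 0])
    next
      case False
      then obtain r where r: "y = ereal r" using y by (cases y) auto
      then show ?thesis using False y by (intro that[of r]) auto
    qed
    define b where "b = (y' + a) / 2"
    have b: "y' < b" "b < a" "0 < b" using y' by (auto simp: b_def)
    have "\<forall>y<ereal a. eventually (\<lambda>n. y < ereal (x n)) sequentially" using H by (simp add: le_Liminf_iff)
    from this[rule_format, of "ereal b"] b(2)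
    have ev1: "eventually (\<lambda>n. b < x n) sequentially" by simp
    have "y' / b < 1" using b by simp
    then have ev2: "eventually (\<lambda>n. y' / b < c n) sequentially"
      using order_tendstoD(1)[OF c] by blast
    show "eventually (\<lambda>n. y < ereal (x n * c n)) sequentially"
      using ev1 ev2
    proof eventually_elim
      case (elim n)
      have "b * (y' / b) < x n * c n"
        using elim b y' by (intro mult_strict_mono) auto
      then have "y' < x n * c n" using b by simp
      then show ?case using y'(3) order_le_less_trans[of y "ereal y'" "ereal (x n * c n)"] by simp
    qed
  qed
  then show ?thesis by (simp add: le_Liminf_iff)
qed

context brw
begin

definition "Dk = {X \<in> events. \<forall>e>0. \<exists>K. \<exists>B\<in>Fs (Ig K). prob ((X - B) \<union> (B - X)) < e}"

lemma Fs_sa: "sigma_algebra UNIV (Fs I)"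
  unfolding Fs_def by (rule sigma_algebra_sigma_sets) auto

lemma Dk_Dynkin: "Dynkin_system UNIV Dk"
proof (rule Dynkin_systemI)
  show "UNIV \<in> Dk"
  proof -
    interpret S: sigma_algebra UNIV "Fs (Ig 0)" by (rule Fs_sa)
    have "UNIV \<in> Fs (Ig 0)" by simp
    then show ?thesis unfolding Dk_def using sets.top[of PP] by (auto intro!: exI[of _ 0] bexI[of _ UNIV])
  qed
next
  fix A assume A: "A \<in> Dk"
  show "UNIV - A \<in> Dk" unfolding Dk_def
  proof (intro CollectI conjI allI impI)
    show "UNIV - A \<in> events" using A by (auto simp: Dk_def intro: compl_ev)
    fix e :: real assume "e > 0"
    then obtain K B where B: "B \<in> Fs (Ig K)" "prob ((A - B) \<union> (B - A)) < e" using A by (auto simp: Dk_def)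
    interpret S: sigma_algebra UNIV "Fs (Ig K)" by (rule Fs_sa)
    have "UNIV - B \<in> Fs (Ig K)" using B(1) by (rule S.compl_sets)
    moreover have "((UNIV - A) - (UNIV - B)) \<union> ((UNIV - B) - (UNIV - A)) = (A - B) \<union> (B - A)" by auto
    ultimately show "\<exists>K. \<exists>B\<in>Fs (Ig K). prob ((UNIV - A - B) \<union> (B - (UNIV - A))) < e" using B by metis
  qed
next
  fix A :: "nat \<Rightarrow> cfg set" assume disj: "disjoint_family A" and rA: "range A \<subseteq> Dk"
  have Aev: "A i \<in> events" for i using rA by (auto simp: Dk_def)
  define U where "U = (\<Union>i. A i)"
  have Uev: "U \<in> events" unfolding U_def using Aev by auto
  show "(\<Union>i. A i) \<in> Dk" unfolding Dk_def
  proof (intro CollectI conjI allI impI)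
    show "(\<Union>i. A i) \<in> events" using Aev by auto
    fix e :: real assume e: "e > 0"
    have lim: "(\<lambda>n. prob (\<Union>i\<in>{..<n}. A i)) \<longlonglongrightarrow> prob U"
    proof -
      have "(\<lambda>n. prob (\<Union>i\<in>{..<n}. A i)) \<longlonglongrightarrow> prob (\<Union>n. \<Union>i\<in>{..<n}. A i)"
      proof (rule finite_Lim_measure_incseq)
        show "incseq (\<lambda>n. \<Union>i\<in>{..<n}. A i)" unfolding incseq_def by (intro allI impI UN_mono) auto
      qed (use Aev in auto)
      moreover have "(\<Union>n. \<Union>i\<in>{..<n}. A i) = U" unfolding U_def by auto
      ultimately show ?thesis by simp
    qed
    have "eventually (\<lambda>n. prob U - e/2 < prob (\<Union>i\<in>{..<n}. A i)) sequentially"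
      using order_tendstoD(1)[OF lim, of "prob U - e/2"] e by simp
    then obtain n where n: "prob U - e/2 < prob (\<Union>i\<in>{..<n}. A i)" "n \<ge> 1"
      using eventually_ge_at_top[of 1] by (metis (no_types, lifting) eventually_sequentially order_refl max.cobounded1 max.cobounded2 le_trans)
    define e' where "e' = e / (2 * n)"
    have e': "e' > 0" using e n by (simp add: e'_def)
    have "\<forall>i. \<exists>KB. snd KB \<in> Fs (Ig (fst KB)) \<and> prob ((A i - snd KB) \<union> (snd KB - A i)) < e'"
      using rA e' unfolding Dk_def by (fastforce simp: image_subset_iff)
    then obtain f where f: "\<And>i. snd (f i) \<in> Fs (Ig (fst (f i)))" "\<And>i. prob ((A i - snd (f i)) \<union> (snd (f i) - A i)) < e'"
      by metis
    define K where "K = Max ((\<lambda>i. fst (f i)) ` {..<n})"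
    define B where "B = (\<Union>i\<in>{..<n}. snd (f i))"
    have fK: "snd (f i) \<in> Fs (Ig K)" if "i < n" for i
      using f(1)[of i] Fs_mono[OF Ig_mono[of "fst (f i)" K]] that by (auto simp: K_def)
    interpret S: sigma_algebra UNIV "Fs (Ig K)" by (rule Fs_sa)
    have BK: "B \<in> Fs (Ig K)" unfolding B_def using fK by (intro S.finite_UN) auto
    have fev: "snd (f i) \<in> events" for i using Fs_events[OF f(1)] .
    have sub: "(U - B) \<union> (B - U) \<subseteq> (U - (\<Union>i\<in>{..<n}. A i)) \<union> (\<Union>i\<in>{..<n}. (A i - snd (f i)) \<union> (snd (f i) - A i))"
    proof
      fix x assume x: "x \<in> (U - B) \<union> (B - U)"
      show "x \<in> (U - (\<Union>i\<in>{..<n}. A i)) \<union> (\<Union>i\<in>{..<n}. (A i - snd (f i)) \<union> (snd (f i) - A i))"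
      proof (cases "x \<in> U")
        case True
        then obtain j where j: "x \<in> A j" unfolding U_def by auto
        show ?thesis
        proof (cases "j < n")
          case True then show ?thesis using x j \<open>x \<in> U\<close> by (auto simp: B_def)
        next
          case False
          have "x \<notin> A i" if "i < n" for i
          proof -
            have "i \<noteq> j" using that False by auto
            then have "A i \<inter> A j = {}" using disj by (auto simp: disjoint_family_on_def)
            then show "x \<notin> A i" using j by auto
          qed
          then show ?thesis using True by auto
        qed
      next
        case False
        then show ?thesis using x unfolding B_def U_def by auto
      qed
    qed
    have "prob ((U - B) \<union> (B - U)) \<le> prob ((U - (\<Union>i\<in>{..<n}. A i)) \<union> (\<Union>i\<in>{..<n}. (A i - snd (f i)) \<union> (snd (f i) - A i)))"
      by (intro finite_measure_mono[OF sub]) (use Uev Aev fev in auto)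
    also have "\<dots> \<le> prob (U - (\<Union>i\<in>{..<n}. A i)) + prob (\<Union>i\<in>{..<n}. (A i - snd (f i)) \<union> (snd (f i) - A i))"
      by (rule measure_subadditive) (use Uev Aev fev in \<open>auto simp: emeasure_finite\<close>)
    also have "prob (\<Union>i\<in>{..<n}. (A i - snd (f i)) \<union> (snd (f i) - A i)) \<le> (\<Sum>i\<in>{..<n}. prob ((A i - snd (f i)) \<union> (snd (f i) - A i)))"
      by (rule finite_measure_subadditive_finite) (use Aev fev in auto)
    also have "\<dots> < (\<Sum>i\<in>{..<n}. e')"
      by (rule sum_strict_mono) (use f(2) n(2) in \<open>auto simp: lessThan_empty_iff\<close>)
    also have "(\<Sum>i\<in>{..<n}. e') = e / 2" using n by (simp add: e'_def)
    also have "prob (U - (\<Union>i\<in>{..<n}. A i)) = prob U - prob (\<Union>i\<in>{..<n}. A i)"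
      by (rule finite_measure_Diff) (use Uev Aev in \<open>auto simp: U_def\<close>)
    finally have "prob ((U - B) \<union> (B - U)) < e" using n(1) by linarith
    then show "\<exists>K. \<exists>B\<in>Fs (Ig K). prob ((\<Union>i. A i) - B \<union> (B - (\<Union>i. A i))) < e"
      using BK unfolding U_def by blast
  qed
qed (auto simp: Dk_def)

lemma sets_PP_Fs: "X \<in> events \<Longrightarrow> X \<in> Fs UNIV"
proof -
  assume X: "X \<in> events"
  have "id \<in> measurable (sigma UNIV (gen UNIV)) PP"
    by (rule meas_into_PP) (auto intro: N_meas_gen xi_meas_gen)
  from Fs_vimage[OF this X] show ?thesis by simp
qed

lemma approx:
  assumes X: "X \<in> events" and e: "e > 0"
  shows "\<exists>K. \<exists>B\<in>Fs (Ig K). prob ((X - B) \<union> (B - X)) < e"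
proof -
  let ?G = "\<Union>K. Fs (Ig K)"
  interpret D: Dynkin_system UNIV Dk by (rule Dk_Dynkin)
  have GD: "?G \<subseteq> Dk"
  proof
    fix B assume "B \<in> ?G"
    then obtain K where B: "B \<in> Fs (Ig K)" by auto
    show "B \<in> Dk" unfolding Dk_def using B Fs_events[OF B] by (auto intro!: exI[of _ K] bexI[of _ B])
  qed
  have stab: "Int_stable ?G"
  proof (rule Int_stableI)
    fix a b assume "a \<in> ?G" "b \<in> ?G"
    then obtain m n where a: "a \<in> Fs (Ig m)" and b: "b \<in> Fs (Ig n)" by auto
    have "a \<in> Fs (Ig (max m n))" "b \<in> Fs (Ig (max m n))"
      using a b Fs_mono[OF Ig_mono[of m "max m n"]] Fs_mono[OF Ig_mono[of n "max m n"]] by auto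
    then show "a \<inter> b \<in> ?G" using Fs_Int by blast
  qed
  have "Fs UNIV \<subseteq> sigma_sets UNIV ?G"
    unfolding Fs_def[of UNIV]
  proof (rule sigma_sets_mono)
    show "gen UNIV \<subseteq> sigma_sets UNIV ?G"
    proof
      fix S assume "S \<in> gen UNIV"
      then obtain i A where S: "S = coord i -` A" by (auto simp: gen_def)
      have "\<exists>K. i \<in> Ig K"
      proof (cases i)
        case (Inl w) then show ?thesis by (intro exI[of _ "Suc (length w)"]) (auto simp: Ig_def)
      next
        case (Inr p) then show ?thesis by (intro exI[of _ "length (fst p)"]) (auto simp: Ig_def)
      qed
      then obtain K where "i \<in> Ig K" by blast
      then have "S \<in> Fs (Ig K)" unfolding Fs_def gen_def S by (auto intro: sigma_sets.Basic)
      then show "S \<in> sigma_sets UNIV ?G" by (auto intro: sigma_sets.Basic)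
    qed
  qed
  also have "sigma_sets UNIV ?G = Dynkin UNIV ?G"
    by (rule sigma_eq_Dynkin[OF _ stab]) auto
  also have "\<dots> \<subseteq> Dk" by (rule D.Dynkin_subset[OF GD])
  finally have "X \<in> Dk" using sets_PP_Fs[OF X] by auto
  then show ?thesis using e by (auto simp: Dk_def)
qed

end

lemma lev_nonempty: "\<forall>w. N w \<ge> 1 \<Longrightarrow> replicate n 0 \<in> lev N n"
  by (auto simp: lev_def gw_tree_def uh_vertices_def Suc_le_eq)

lemma n_over_n_plus: "(\<lambda>n. real n / real (n + g)) \<longlonglongrightarrow> 1"
  by real_asymp

context brw
begin

lemma shift_E:
  assumes u: "u \<in> gw_tree (fst \<omega>)" "brw_pos (snd \<omega>) [] u = []" and N1: "\<forall>w. fst \<omega> w \<ge> 1"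
    and a: "a > 0" and E: "shft u \<omega> \<in> Eset a"
  shows "\<omega> \<in> Eset a"
proof -
  define g where "g = length u"
  define \<omega>' where "\<omega>' = shft u \<omega>"
  have fst': "fst \<omega>' = (\<lambda>v. fst \<omega> (u @ v))" and snd': "snd \<omega>' = (\<lambda>(v, y). snd \<omega> (u @ v, y))"
    by (simp_all add: \<omega>'_def shft_def)
  have key: "Mx n \<omega>' * (real n / real (n + g)) \<le> Mx (n + g) \<omega>" if n: "n \<ge> 1" for n
  proof -
    have ne: "lev (fst \<omega>') n \<noteq> {}" using lev_nonempty[of "fst \<omega>'" n] N1 unfolding fst' by auto
    have "Mx n \<omega>' \<in> (\<lambda>u. real (length (brw_pos (snd \<omega>') [] u)) / real n) ` lev (fst \<omega>') n"
      unfolding Mx_def by (rule Max_in) (use finite_lev ne in auto)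
    then obtain v where v: "v \<in> lev (fst \<omega>') n" "Mx n \<omega>' = real (length (brw_pos (snd \<omega>') [] v)) / real n"
      by blast
    have uv: "u @ v \<in> lev (fst \<omega>) (n + g)"
      using v(1) tree_append[OF u(1), of v] unfolding fst' by (auto simp: lev_def g_def)
    have pos: "brw_pos (snd \<omega>) [] (u @ v) = brw_pos (snd \<omega>') [] v"
      using pos_append[of "snd \<omega>" "[]" u v] u(2) unfolding snd' by simp
    have "real (length (brw_pos (snd \<omega>) [] (u @ v))) / real (n + g) \<le> Mx (n + g) \<omega>"
      unfolding Mx_def by (rule Max_ge) (use finite_lev uv in auto)
    moreover have "Mx n \<omega>' * (real n / real (n + g)) = real (length (brw_pos (snd \<omega>) [] (u @ v))) / real (n + g)"
      using v(2) pos n by (simp add: field_simps)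
    ultimately show ?thesis by linarith
  qed
  have "ereal a \<le> liminf (\<lambda>n. ereal (Mx n \<omega>'))" using E by (simp add: Eset_def \<omega>'_def)
  then have "ereal a \<le> liminf (\<lambda>n. ereal (Mx n \<omega>' * (real n / real (n + g))))"
    by (rule liminf_scale[OF _ a n_over_n_plus])
  also have "\<dots> \<le> liminf (\<lambda>n. ereal (Mx (n + g) \<omega>))"
  proof (rule Liminf_mono)
    show "\<forall>\<^sub>F n in sequentially. ereal (Mx n \<omega>' * (real n / real (n + g))) \<le> ereal (Mx (n + g) \<omega>)"
      using eventually_ge_at_top[of 1]
    proof eventually_elim
      case (elim n) then show ?case using key[of n] by simp
    qed
  qed
  also have "\<dots> = liminf (\<lambda>n. ereal (Mx n \<omega>))"
    using liminf_shift_k[of "\<lambda>n. ereal (Mx n \<omega>)" g] by simp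
  finally show ?thesis by (simp add: Eset_def)
qed

end

theorem proposition2p6:
  fixes lam :: real and kappa :: "nat list \<Rightarrow> nat" and \<mu> :: "nat pmf" and a :: real
  assumes lam_pos: "lam > 0"
    and kappa_pos: "\<And>x. x \<in> uh_vertices kappa \<Longrightarrow> kappa x \<ge> 1"
    and mu0: "pmf \<mu> 0 = 0"
    and mu1: "pmf \<mu> 1 < 1"
    and m_fin: "summable (\<lambda>k. real k * pmf \<mu> k)"
    and m_gt1: "(\<Sum>k. real k * pmf \<mu> k) > 1"
    and strongly_recurrent:
      "\<And>x. x \<in> uh_vertices kappa \<Longrightarrow>
         measure (brw_measure lam kappa \<mu>)
           {(N, \<xi>). \<forall>n. \<exists>u \<in> gw_tree N. length u \<ge> n \<and> brw_pos \<xi> x u = x} = 1"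
    and a_pos: "a > 0"
  shows "(let E = {(N, \<xi>).
              liminf (\<lambda>n. ereal (Max {real (length (brw_pos \<xi> [] u)) / real n
                                     | u. u \<in> gw_tree N \<and> length u = n})) \<ge> ereal a}
          in E \<in> sets (brw_measure lam kappa \<mu>) \<and>
             measure (brw_measure lam kappa \<mu>) E \<in> {0, 1})"
proof -
  interpret brw lam kappa \<mu> .
  have Eeq: "{(N, \<xi>).
              liminf (\<lambda>n. ereal (Max {real (length (brw_pos \<xi> [] u)) / real n
                                     | u. u \<in> gw_tree N \<and> length u = n})) \<ge> ereal a} = Eset a"
  proof -
    have "{real (length (brw_pos \<xi> [] u)) / real n | u. u \<in> gw_tree N \<and> length u = n}
        = (\<lambda>u. real (length (brw_pos \<xi> [] u)) / real n) ` lev N n" for N \<xi> n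
      by (auto simp: lev_def)
    then show ?thesis by (auto simp: Eset_def Mx_def)
  qed
  define q where "q = 1 - prob (Eset a)"
  define X where "X = UNIV - Eset a"
  have Xev: "X \<in> events" unfolding X_def by (rule compl_E)
  have qX: "prob X = q"
  proof -
    have "prob (space PP - Eset a) = 1 - prob (Eset a)" by (rule prob_compl[OF Eset_sets])
    then show ?thesis by (simp only: space_brw X_def q_def)
  qed
  have AE1: "AE \<omega> in PP. \<forall>w. fst \<omega> w \<ge> 1"
    unfolding AE_all_countable
  proof
    fix w :: "nat list"
    have Zev: "{\<omega>. fst \<omega> w = 0} \<in> events"
      using coord_events[of "Inl w" "{[0]}"] by (simp add: coord_def vimage_def)
    have "emeasure PP {\<omega>. fst \<omega> w = 0} = emeasure PP (\<Inter>j\<in>{Inl w}. coord j -` (\<lambda>_. {[0]}) j)"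
      by (auto simp: coord_def intro!: arg_cong[where f="emeasure PP"])
    also have "\<dots> = ecoord (Inl w) {[0]}" by (subst emeasure_cyl) auto
    also have "\<dots> = 0" by (simp add: ecoord_def emeasure_pmf_single mu0)
    finally have "{\<omega>. fst \<omega> w = 0} \<in> null_sets PP" using Zev by auto
    then show "AE \<omega> in PP. fst \<omega> w \<ge> 1"
      by (rule AE_I') auto
  qed
  have "[] \<in> uh_vertices kappa" by (simp add: uh_vertices_def)
  from strongly_recurrent[OF this]
  have "AE \<omega> in PP. \<omega> \<in> {(N, \<xi>). \<forall>n. \<exists>u \<in> gw_tree N. length u \<ge> n \<and> brw_pos \<xi> [] u = []}"
    by (rule AE_prob_1)
  then have AE2: "AE \<omega> in PP. \<forall>n. \<exists>u \<in> gw_tree (fst \<omega>). length u \<ge> n \<and> brw_pos (snd \<omega>) [] u = []"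
    by (rule eventually_mono) auto
  have main: "q \<le> q * q + 2 * e" if e: "e > 0" for e
  proof -
    obtain K B where B: "B \<in> Fs (Ig K)" "prob ((X - B) \<union> (B - X)) < e"
      using approx[OF Xev e] by blast
    have Bev: "B \<in> events" by (rule Fs_events[OF B(1)])
    define G where "G = (\<Union>u. Dset K u \<inter> Tset a u)"
    have Gev: "G \<in> events" unfolding G_def
      using D_events Fs_events[OF Tset_Fs] by (intro sets.countable_UN) auto
    have "AE \<omega> in PP. \<omega> \<in> X \<longrightarrow> \<omega> \<in> (B \<inter> G) \<union> (X - B)"
      using AE1 AE2
    proof eventually_elim
      case (elim \<omega>)
      show ?case
      proof
        assume \<omega>X: "\<omega> \<in> X"
        obtain v where "v \<in> gw_tree (fst \<omega>)" "length v \<ge> K" "brw_pos (snd \<omega>) [] v = []"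
          using elim(2) by blast
        then have "ret K \<omega> v" by (simp add: ret_def)
        then obtain u where u: "\<omega> \<in> Dset K u" using D_cover by blast
        then have r: "ret K \<omega> u" by (simp add: Dset_def)
        have "\<omega> \<in> Tset a u"
        proof -
          have "shft u \<omega> \<notin> Eset a"
          proof
            assume "shft u \<omega> \<in> Eset a"
            then have "\<omega> \<in> Eset a" using shift_E[of u \<omega> a] r elim(1) a_pos by (simp add: ret_def)
            then show False using \<omega>X by (simp add: X_def)
          qed
          then show ?thesis by (simp add: Tset_eq)
        qed
        then have "\<omega> \<in> G" using u by (auto simp: G_def)
        then show "\<omega> \<in> (B \<inter> G) \<union> (X - B)" using \<omega>X by auto
      qed
    qed
    then have "prob X \<le> prob ((B \<inter> G) \<union> (X - B))"
      by (rule finite_measure_mono_AE) (use Bev Gev Xev in auto)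
    also have "\<dots> \<le> prob (B \<inter> G) + prob (X - B)"
      by (rule measure_subadditive) (use Bev Gev Xev in \<open>auto simp: emeasure_finite\<close>)
    also have "prob (B \<inter> G) \<le> q * prob B"
      unfolding G_def q_def by (rule claim2[OF B(1)])
    also have "prob (X - B) \<le> prob ((X - B) \<union> (B - X))"
      by (rule finite_measure_mono) (use Bev Xev in auto)
    finally have 1: "q \<le> q * prob B + e" using B(2) qX by linarith
    have "prob B \<le> prob (X \<union> (B - X))" by (rule finite_measure_mono) (use Bev Xev in auto)
    also have "\<dots> \<le> prob X + prob (B - X)"
      by (rule measure_subadditive) (use Bev Xev in \<open>auto simp: emeasure_finite\<close>)
    also have "prob (B - X) \<le> prob ((X - B) \<union> (B - X))"
      by (rule finite_measure_mono) (use Bev Xev in auto)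
    finally have 2: "prob B \<le> q + e" using B(2) qX by linarith
    have q0: "0 \<le> q" "q \<le> 1" using qX Xev by auto
    have "q * prob B \<le> q * (q + e)" using 2 q0 by (intro mult_left_mono) auto
    also have "\<dots> \<le> q * q + e" using q0 e by (simp add: algebra_simps mult_left_le_one_le)
    finally show ?thesis using 1 by linarith
  qed
  have q0: "0 \<le> q" "q \<le> 1" using qX Xev by auto
  have "q \<le> q * q"
  proof (rule ccontr)
    assume "\<not> q \<le> q * q"
    then have "(q - q * q) / 4 > 0" by simp
    from main[OF this] have "q \<le> q * q + (q - q * q) / 2" by argo
    with \<open>\<not> q \<le> q * q\<close> show False by (simp add: field_simps)
  qed
  moreover have "q * q \<le> q" using q0 by (simp add: mult_left_le_one_le)
  ultimately have "q * (1 - q) = 0" by (simp add: algebra_simps)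
  then have "q = 0 \<or> q = 1" by simp
  then have "prob (Eset a) \<in> {0, 1}" unfolding q_def by auto
  then show ?thesis unfolding Let_def Eeq using Eset_sets by simp
qed


end
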